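(* Let $0<p\le1/2$ and consider $\{0,1\}^n$ with the measure $\mu_p$. For every $f:\{0,1\}^n\to\mathbb{R}$ and every $0\le\delta\le\sqrt{\frac{p\lfloor\log(1/p)\rfloor}{1-p}}$, \[ \|T_\delta f\|_2\le\|f\|_{1+\frac{1-p}{p\lfloor\log(1/p)\rfloor}\delta^2}. \]
   Context: $\mu_p$ is the product measure on $\{0,1\}^n$ with $\mu_p(x)=p^{\sum_i x_i}(1-p)^{n-\sum_i x_i}$, and $\|f\|_q=(\mathbb{E}_{\mu_p}|f|^q)^{1/q}$. Elements of $\{0,1\}^n$ are identified with subsets of $\{1,\dots,n\}$; for $S,T\subseteq\{1,\dots,n\}$, $u_S(T)=\big(-\sqrt{(1-p)/p}\big)^{|S\cap T|}\big(\sqrt{p/(1-p)}\big)^{|S\setminus T|}$. These form an orthonormal basis of $L^2(\mu_p)$ and $f=\sum_S\hat f(S)u_S$ with $\hat f(S)=\mathbb{E}_{\mu_p}[fu_S]$. The noise operator is $T_\delta f=\sum_S\delta^{|S|}\hat f(S)u_S$. $\log$ is base 2. *)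

theory Defs
  imports Complex_Main
begin

text \<open>The cube {0,1}^n is identified with the subsets of {0..<n} (coordinates indexed 0..n-1).\<close>

definition cube :: "nat \<Rightarrow> nat set set" where
  "cube n = Pow {..<n}"

definition mu :: "real \<Rightarrow> nat \<Rightarrow> nat set \<Rightarrow> real" where
  "mu p n T = p ^ card T * (1 - p) ^ (n - card T)"

definition expect :: "real \<Rightarrow> nat \<Rightarrow> (nat set \<Rightarrow> real) \<Rightarrow> real" where
  "expect p n f = (\<Sum>T\<in>cube n. mu p n T * f T)"

definition qnorm :: "real \<Rightarrow> nat \<Rightarrow> real \<Rightarrow> (nat set \<Rightarrow> real) \<Rightarrow> real" where
  "qnorm p n q f = (expect p n (\<lambda>T. \<bar>f T\<bar> powr q)) powr (1 / q)"

definition ubasis :: "real \<Rightarrow> nat set \<Rightarrow> nat set \<Rightarrow> real" where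
  "ubasis p S T = (- sqrt ((1 - p) / p)) ^ card (S \<inter> T) * (sqrt (p / (1 - p))) ^ card (S - T)"

definition fourier :: "real \<Rightarrow> nat \<Rightarrow> (nat set \<Rightarrow> real) \<Rightarrow> nat set \<Rightarrow> real" where
  "fourier p n f S = expect p n (\<lambda>T. f T * ubasis p S T)"

definition noise :: "real \<Rightarrow> nat \<Rightarrow> real \<Rightarrow> (nat set \<Rightarrow> real) \<Rightarrow> nat set \<Rightarrow> real" where
  "noise p n \<delta> f T = (\<Sum>S\<in>cube n. \<delta> ^ card S * fourier p n f S * ubasis p S T)"

end

theory Submission
  imports Defs "HOL-Analysis.Analysis"
begin


lemma powr_conv:
  fixes a b t s :: real
  assumes "0 \<le> a" "0 \<le> b" "0 \<le> t" "t \<le> 1" "1 \<le> s"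
  shows "((1-t)*a + t*b) powr s \<le> (1-t) * a powr s + t * b powr s"
proof (cases "a = 0 \<or> b = 0")
  case True
  have k: "c powr s \<le> c" if "0 \<le> c" "c \<le> 1" for c :: real
    using that assms(5) by (metis powr_mono' powr_one_gt_zero_iff powr_one leI le_less not_one_le_zero)
  show ?thesis
  proof (cases "a = 0")
    case True
    have "(t*b) powr s = t powr s * b powr s" using assms by (simp add: powr_mult)
    also have "\<dots> \<le> t * b powr s" using k[of t] assms by (intro mult_right_mono) auto
    finally show ?thesis using True assms by simp
  next
    case False
    hence "b = 0" using \<open>a = 0 \<or> b = 0\<close> by simp
    have "((1-t)*a) powr s = (1-t) powr s * a powr s" using assms by (simp add: powr_mult)
    also have "\<dots> \<le> (1-t) * a powr s" using k[of "1-t"] assms by (intro mult_right_mono) auto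
    finally show ?thesis using \<open>b=0\<close> assms by simp
  qed
next
  case False
  hence "a > 0" "b > 0" using assms by auto
  from convex_onD[OF powr_convex[OF assms(5)], of t a b] this assms show ?thesis by simp
qed



lemma mink:
  fixes U V mu :: "'a \<Rightarrow> real" and a b s :: real
  assumes fin: "finite A" and nn: "\<And>x. x\<in>A \<Longrightarrow> 0 \<le> mu x \<and> 0 \<le> U x \<and> 0 \<le> V x"
    and s: "1 \<le> s" and a: "0 \<le> a" and b: "0 \<le> b"
    and hU: "(\<Sum>x\<in>A. mu x * U x powr s) \<le> a powr s"
    and hV: "(\<Sum>x\<in>A. mu x * V x powr s) \<le> b powr s"
  shows "(\<Sum>x\<in>A. mu x * (U x + V x) powr s) \<le> (a + b) powr s"
proof -
  have zero_case: "(\<Sum>x\<in>A. mu x * (U x + V x) powr s) = (\<Sum>x\<in>A. mu x * V x powr s)"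
    if h: "(\<Sum>x\<in>A. mu x * U x powr s) \<le> 0"
      and nn': "\<And>x. x\<in>A \<Longrightarrow> 0 \<le> mu x \<and> 0 \<le> U x \<and> 0 \<le> V x" for U V :: "'a \<Rightarrow> real"
  proof -
    have "\<forall>x\<in>A. mu x * U x powr s = 0"
      using h nn' by (subst sum_nonneg_eq_0_iff[OF fin, symmetric]) (auto intro!: antisym sum_nonneg)
    hence "\<And>x. x \<in> A \<Longrightarrow> mu x = 0 \<or> U x = 0" by auto
    thus ?thesis by (intro sum.cong) (auto, metis add_0 mult_eq_0_iff)
  qed
  show ?thesis
  proof (cases "a = 0 \<or> b = 0")
    case True
    show ?thesis
    proof (cases "a = 0")
      case True
      have "(\<Sum>x\<in>A. mu x * (U x + V x) powr s) = (\<Sum>x\<in>A. mu x * V x powr s)"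
        using hU True s by (intro zero_case nn) auto
      then show ?thesis using hV True by simp
    next
      case False
      hence "b = 0" using \<open>a = 0 \<or> b = 0\<close> by simp
      have "(\<Sum>x\<in>A. mu x * (V x + U x) powr s) = (\<Sum>x\<in>A. mu x * U x powr s)"
        using hV \<open>b=0\<close> s by (intro zero_case) (use nn in auto)
      then show ?thesis using hU \<open>b=0\<close> by (simp add: add.commute)
    qed
  next
    case False
    hence ap: "a > 0" and bp: "b > 0" using a b by auto
    define t where "t = b / (a + b)"
    have t0: "0 \<le> t" and t1: "t \<le> 1" using ap bp by (auto simp: t_def)
    have omt: "1 - t = a / (a+b)" using ap bp by (simp add: t_def field_simps)
    have pw: "mu x * (U x + V x) powr s \<le>
        (a+b) powr s * ((1-t) / a powr s * (mu x * U x powr s) + t / b powr s * (mu x * V x powr s))"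
      if x: "x \<in> A" for x
    proof -
      have e1: "(1-t)*(U x / a) = U x / (a+b)" using ap bp by (simp add: omt)
      have e2: "t*(V x / b) = V x / (a+b)" using ap bp by (simp add: t_def)
      have e: "U x + V x = (a+b) * ((1-t)*(U x / a) + t*(V x / b))"
        unfolding e1 e2 using ap bp by (simp add: add_divide_distrib[symmetric])
      have "(U x + V x) powr s = (a+b) powr s * ((1-t)*(U x / a) + t*(V x / b)) powr s"
        unfolding e using ap bp nn[OF x] t0 t1 by (auto intro!: powr_mult)
      also have "\<dots> \<le> (a+b) powr s * ((1-t) * (U x / a) powr s + t * (V x / b) powr s)"
        using ap bp nn[OF x] t0 t1 s by (intro mult_left_mono powr_conv) auto
      also have "\<dots> = (a+b) powr s * ((1-t) / a powr s * U x powr s + t / b powr s * V x powr s)"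
        using ap bp nn[OF x] by (simp add: powr_divide)
      finally have "(U x + V x) powr s \<le> \<dots>" .
      hence "mu x * (U x + V x) powr s \<le> mu x * ((a+b) powr s * ((1-t) / a powr s * U x powr s + t / b powr s * V x powr s))"
        using nn[OF x] by (intro mult_left_mono) auto
      thus ?thesis by (simp add: algebra_simps)
    qed
    have "(\<Sum>x\<in>A. mu x * (U x + V x) powr s) \<le>
        (\<Sum>x\<in>A. (a+b) powr s * ((1-t) / a powr s * (mu x * U x powr s) + t / b powr s * (mu x * V x powr s)))"
      by (intro sum_mono pw)
    also have "\<dots> = (a+b) powr s * ((1-t) / a powr s * (\<Sum>x\<in>A. mu x * U x powr s) + t / b powr s * (\<Sum>x\<in>A. mu x * V x powr s))"
      by (simp add: sum_distrib_left sum.distrib distrib_left)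
    also have "\<dots> \<le> (a+b) powr s * ((1-t) / a powr s * a powr s + t / b powr s * b powr s)"
      using t0 t1 hU hV by (intro mult_left_mono add_mono) (auto intro!: mult_left_mono)
    also have "\<dots> = (a+b) powr s" using ap bp by simp
    finally show ?thesis .
  qed
qed



definition pmu :: "(nat \<Rightarrow> real) \<Rightarrow> nat \<Rightarrow> nat set \<Rightarrow> real" where
  "pmu w n T = (\<Prod>i<n. if i \<in> T then w i else 1 - w i)"
definition pker :: "(nat \<Rightarrow> bool \<Rightarrow> bool \<Rightarrow> real) \<Rightarrow> nat \<Rightarrow> nat set \<Rightarrow> nat set \<Rightarrow> real" where
  "pker c n U T = (\<Prod>i<n. c i (i \<in> U) (i \<in> T))"
definition pop :: "(nat \<Rightarrow> real) \<Rightarrow> (nat \<Rightarrow> bool \<Rightarrow> bool \<Rightarrow> real) \<Rightarrow> nat \<Rightarrow> (nat set \<Rightarrow> real) \<Rightarrow> nat set \<Rightarrow> real" where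
  "pop w c n f T = (\<Sum>U\<in>Pow {..<n}. pmu w n U * pker c n U T * f U)"
definition HC1 :: "real \<Rightarrow> (bool \<Rightarrow> bool \<Rightarrow> real) \<Rightarrow> real \<Rightarrow> bool" where
  "HC1 w c q \<longleftrightarrow> (\<forall>x0 x1. (1-w) * ((1-w)*c False False*x0 + w*c True False*x1)^2
       + w*((1-w)*c False True*x0 + w*c True True*x1)^2
     \<le> ((1-w)*\<bar>x0\<bar> powr q + w*\<bar>x1\<bar> powr q) powr (2/q))"

lemma sum_Pow_Suc:
  "(\<Sum>T\<in>Pow {..<Suc n}. g T) = (\<Sum>T\<in>Pow {..<n}. g T + g (insert n T))"
proof -
  have "Pow {..<Suc n} = Pow {..<n} \<union> insert n ` Pow {..<n}"
    by (simp add: lessThan_Suc Pow_insert)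
  moreover have "Pow {..<n} \<inter> insert n ` Pow {..<n} = {}" by auto
  moreover have "inj_on (insert n) (Pow {..<n})"
    by (rule inj_onI) (metis PowD insert_Diff_if lessThan_iff less_irrefl subset_eq Diff_insert_absorb)
  ultimately show ?thesis
    by (simp add: sum.union_disjoint sum.reindex sum.distrib)
qed

lemma pmu_Suc: "pmu w (Suc n) T = pmu w n T * (if n \<in> T then w n else 1 - w n)"
  by (simp add: pmu_def)
lemma pker_Suc: "pker c (Suc n) U T = pker c n U T * c n (n \<in> U) (n \<in> T)"
  by (simp add: pker_def)
lemma pmu_ins: "pmu w n (insert n T) = pmu w n T"
  by (auto simp: pmu_def intro!: prod.cong)
lemma pker_ins1: "pker c n (insert n U) T = pker c n U T"
  by (auto simp: pker_def intro!: prod.cong)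
lemma pker_ins2: "pker c n U (insert n T) = pker c n U T"
  by (auto simp: pker_def intro!: prod.cong)

lemma sum_Pow_prod:
  fixes g :: "nat \<Rightarrow> bool \<Rightarrow> real"
  shows "(\<Sum>T\<in>Pow {..<n::nat}. \<Prod>i<n. g i (i \<in> T)) = (\<Prod>i<n. g i False + g i True)"
proof (induction n)
  case 0 then show ?case by simp
next
  case (Suc n)
  have a: "(\<Prod>i<n. g i (i \<in> insert n T)) = (\<Prod>i<n. g i (i \<in> T))" for T
    by (auto intro!: prod.cong)
  have "(\<Sum>T\<in>Pow {..<Suc n}. \<Prod>i<Suc n. g i (i \<in> T))
     = (\<Sum>T\<in>Pow {..<n}. (\<Prod>i<n. g i (i \<in> T)) * (g n False + g n True))"
    unfolding sum_Pow_Suc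
  proof (intro sum.cong refl)
    fix T assume "T \<in> Pow {..<n}"
    hence "n \<notin> T" by auto
    thus "(\<Prod>i<Suc n. g i (i \<in> T)) + (\<Prod>i<Suc n. g i (i \<in> insert n T)) = (\<Prod>i<n. g i (i \<in> T)) * (g n False + g n True)"
      by (simp add: a algebra_simps)
  qed
  also have "\<dots> = (\<Prod>i<Suc n. g i False + g i True)"
    by (simp add: sum_distrib_right[symmetric] Suc)
  finally show ?case .
qed

lemma pop_Suc:
  assumes "T \<subseteq> {..<n}"
  shows "pop w c (Suc n) f (if e then insert n T else T) =
     (1 - w n) * c n False e * pop w c n f T + w n * c n True e * pop w c n (\<lambda>U. f (insert n U)) T"
proof -
  have nT: "n \<notin> T" using assms by auto
  have k: "pker c n U (if e then insert n T else T) = pker c n U T" for U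
    by (simp add: pker_ins2)
  have m: "(n \<in> (if e then insert n T else T)) = e" using nT by auto
  have "pop w c (Suc n) f (if e then insert n T else T) =
    (\<Sum>U\<in>Pow {..<n}. pmu w n U * (1 - w n) * (pker c n U T * c n False e) * f U
        + pmu w n U * w n * (pker c n U T * c n True e) * f (insert n U))"
    unfolding pop_def sum_Pow_Suc
    by (intro sum.cong refl) (auto simp: pmu_Suc pker_Suc pmu_ins pker_ins1 k m)
  also have "\<dots> = (1 - w n) * c n False e * pop w c n f T + w n * c n True e * pop w c n (\<lambda>U. f (insert n U)) T"
    unfolding pop_def sum.distrib sum_distrib_left
    by (intro arg_cong2[where f="(+)"] sum.cong refl) (auto simp: ac_simps)
  finally show ?thesis .
qed

lemma pmu_nonneg: "(\<And>i. i < n \<Longrightarrow> 0 \<le> w i \<and> w i \<le> 1) \<Longrightarrow> 0 \<le> pmu w n T"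
  unfolding pmu_def by (intro prod_nonneg) auto

lemma abs_powr2: "\<bar>x::real\<bar> powr 2 = x^2"
  by (cases "x = 0") (auto simp: powr_numeral)

theorem hc_tensor:
  assumes q1: "1 \<le> q" and q2: "q \<le> 2"
    and hw: "\<And>i. i < n \<Longrightarrow> 0 \<le> w i \<and> w i \<le> 1 \<and> HC1 (w i) (c i) q"
  shows "(\<Sum>T\<in>Pow {..<n}. pmu w n T * (pop w c n f T)^2)
     \<le> (\<Sum>T\<in>Pow {..<n}. pmu w n T * \<bar>f T\<bar> powr q) powr (2/q)"
  using hw
proof (induction n arbitrary: f)
  case 0
  have "(f {})^2 = (\<bar>f {}\<bar> powr q) powr (2/q)"
    using q1 by (simp add: powr_powr abs_powr2)
  then show ?case by (simp add: pop_def pmu_def pker_def)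
next
  case (Suc n)
  define W where "W = w n"
  define f1 where "f1 = (\<lambda>U. f (insert n U))"
  define h0 where "h0 = pop w c n f"
  define h1 where "h1 = pop w c n f1"
  define s where "s = 2 / q"
  have s1: "1 \<le> s" using q1 q2 by (simp add: s_def)
  have qs: "q * s = 2" using q1 by (simp add: s_def)
  have W: "0 \<le> W" "W \<le> 1" "HC1 W (c n) q" using Suc.prems[of n] by (auto simp: W_def)
  have wn: "\<And>i. i < n \<Longrightarrow> 0 \<le> w i \<and> w i \<le> 1" using Suc.prems by auto
  have IH0: "(\<Sum>T\<in>Pow {..<n}. pmu w n T * (h0 T)^2) \<le> (\<Sum>T\<in>Pow {..<n}. pmu w n T * \<bar>f T\<bar> powr q) powr s"
    unfolding h0_def s_def by (rule Suc.IH) (use Suc.prems in auto)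
  have IH1: "(\<Sum>T\<in>Pow {..<n}. pmu w n T * (h1 T)^2) \<le> (\<Sum>T\<in>Pow {..<n}. pmu w n T * \<bar>f1 T\<bar> powr q) powr s"
    unfolding h1_def s_def by (rule Suc.IH) (use Suc.prems in auto)
  define U where "U = (\<lambda>T. (1 - W) * \<bar>h0 T\<bar> powr q)"
  define V where "V = (\<lambda>T. W * \<bar>h1 T\<bar> powr q)"
  define A where "A = (1 - W) * (\<Sum>T\<in>Pow {..<n}. pmu w n T * \<bar>f T\<bar> powr q)"
  define B where "B = W * (\<Sum>T\<in>Pow {..<n}. pmu w n T * \<bar>f1 T\<bar> powr q)"
  have pn: "0 \<le> pmu w n T" for T by (rule pmu_nonneg) (use wn in auto)
  have step1: "(\<Sum>T\<in>Pow {..<Suc n}. pmu w (Suc n) T * (pop w c (Suc n) f T)^2)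
     = (\<Sum>T\<in>Pow {..<n}. pmu w n T * ((1-W) * ((1-W)*c n False False*h0 T + W*c n True False*h1 T)^2
       + W*((1-W)*c n False True*h0 T + W*c n True True*h1 T)^2))"
  proof -
    have "(\<Sum>T\<in>Pow {..<Suc n}. pmu w (Suc n) T * (pop w c (Suc n) f T)^2)
      = (\<Sum>T\<in>Pow {..<n}. pmu w (Suc n) T * (pop w c (Suc n) f (if False then insert n T else T))^2
         + pmu w (Suc n) (insert n T) * (pop w c (Suc n) f (if True then insert n T else T))^2)"
      by (simp add: sum_Pow_Suc)
    also have "\<dots> = (\<Sum>T\<in>Pow {..<n}. pmu w n T * ((1-W) * ((1-W)*c n False False*h0 T + W*c n True False*h1 T)^2
       + W*((1-W)*c n False True*h0 T + W*c n True True*h1 T)^2))"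
    proof (intro sum.cong refl)
      fix T assume T: "T \<in> Pow {..<n}"
      hence nT: "n \<notin> T" by auto
      show "pmu w (Suc n) T * (pop w c (Suc n) f (if False then insert n T else T))^2
         + pmu w (Suc n) (insert n T) * (pop w c (Suc n) f (if True then insert n T else T))^2
        = pmu w n T * ((1-W) * ((1-W)*c n False False*h0 T + W*c n True False*h1 T)^2
       + W*((1-W)*c n False True*h0 T + W*c n True True*h1 T)^2)"
        unfolding pop_Suc[OF T[simplified]] using nT
        by (simp add: pmu_Suc pmu_ins W_def h0_def h1_def f1_def algebra_simps)
    qed
    finally show ?thesis .
  qed
  also have "\<dots> \<le> (\<Sum>T\<in>Pow {..<n}. pmu w n T * (U T + V T) powr s)"
    using W(3) pn unfolding HC1_def U_def V_def s_def
    by (intro sum_mono mult_left_mono) auto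
  also have "\<dots> \<le> (A + B) powr s"
  proof (rule mink)
    show "finite (Pow {..<n})" by simp
    show "\<And>x. x \<in> Pow {..<n} \<Longrightarrow> 0 \<le> pmu w n x \<and> 0 \<le> U x \<and> 0 \<le> V x"
      using pn W by (auto simp: U_def V_def)
    show "1 \<le> s" by (rule s1)
    show "0 \<le> A" using W pn by (auto simp: A_def intro!: sum_nonneg mult_nonneg_nonneg)
    show "0 \<le> B" using W pn by (auto simp: B_def intro!: sum_nonneg mult_nonneg_nonneg)
    have pU: "(U T) powr s = (1-W) powr s * (h0 T)^2" for T
      using W by (simp add: U_def powr_mult powr_powr qs abs_powr2)
    have pV: "(V T) powr s = W powr s * (h1 T)^2" for T
      using W by (simp add: V_def powr_mult powr_powr qs abs_powr2)
    have "(\<Sum>x\<in>Pow {..<n}. pmu w n x * U x powr s) = (1-W) powr s * (\<Sum>T\<in>Pow {..<n}. pmu w n T * (h0 T)^2)"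
      by (simp add: pU sum_distrib_left algebra_simps)
    also have "\<dots> \<le> (1-W) powr s * (\<Sum>T\<in>Pow {..<n}. pmu w n T * \<bar>f T\<bar> powr q) powr s"
      by (intro mult_left_mono IH0) auto
    also have "\<dots> = A powr s" using W pn
      by (simp add: A_def powr_mult sum_nonneg)
    finally show "(\<Sum>x\<in>Pow {..<n}. pmu w n x * U x powr s) \<le> A powr s" .
    have "(\<Sum>x\<in>Pow {..<n}. pmu w n x * V x powr s) = W powr s * (\<Sum>T\<in>Pow {..<n}. pmu w n T * (h1 T)^2)"
      by (simp add: pV sum_distrib_left algebra_simps)
    also have "\<dots> \<le> W powr s * (\<Sum>T\<in>Pow {..<n}. pmu w n T * \<bar>f1 T\<bar> powr q) powr s"
      by (intro mult_left_mono IH1) auto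
    also have "\<dots> = B powr s" using W pn
      by (simp add: B_def powr_mult sum_nonneg)
    finally show "(\<Sum>x\<in>Pow {..<n}. pmu w n x * V x powr s) \<le> B powr s" .
  qed
  also have "A + B = (\<Sum>T\<in>Pow {..<Suc n}. pmu w (Suc n) T * \<bar>f T\<bar> powr q)"
  proof -
    have "(\<Sum>T\<in>Pow {..<Suc n}. pmu w (Suc n) T * \<bar>f T\<bar> powr q)
       = (\<Sum>T\<in>Pow {..<n}. (1 - W) * (pmu w n T * \<bar>f T\<bar> powr q) + W * (pmu w n T * \<bar>f1 T\<bar> powr q))"
      unfolding sum_Pow_Suc
      by (intro sum.cong refl) (auto simp: pmu_Suc pmu_ins W_def f1_def)
    thus ?thesis by (simp add: A_def B_def sum.distrib sum_distrib_left)
  qed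
  finally show ?case by (simp add: s_def)
qed



lemma bern_conc:
  fixes z r :: real
  assumes "0 \<le> z" "0 \<le> r" "r \<le> 1"
  shows "(1 + z) powr r \<le> 1 + r * z"
  using Youngs_inequality_0[of r "1 - r" "1 + z" 1] assms by (simp add: algebra_simps)

lemma amgm_neg:
  fixes x e :: real
  assumes "0 \<le> x" "x < 1" "e \<le> 0"
  shows "2 \<le> (1 + x) powr e + (1 - x) powr e"
proof -
  define u where "u = (1 + x) powr (e/2)"
  define v where "v = (1 - x) powr (e/2)"
  have uv: "u * v = (1 - x^2) powr (e/2)"
    using assms by (simp add: u_def v_def powr_mult[symmetric] power2_eq_square algebra_simps)
  have "1 \<le> (1 - x^2) powr (e/2)"
  proof -
    have "0 < 1 - x^2" using assms by (simp add: power2_eq_square) (metis abs_of_nonneg abs_square_less_1 power2_eq_square)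
    moreover have "1 - x^2 \<le> 1" by simp
    ultimately have "(1 - x^2) powr (-(e/2)) \<le> 1" using assms
      by (intro powr_le1) auto
    thus ?thesis using \<open>0 < 1 - x^2\<close> by (simp add: powr_minus field_simps)
  qed
  hence "2 \<le> 2 * (u * v)" using uv by simp
  also have "\<dots> \<le> u^2 + v^2" using zero_le_power2[of "u - v"] by (simp add: power2_diff algebra_simps)
  also have "u^2 = (1 + x) powr e" using assms by (simp add: u_def power2_eq_square powr_add[symmetric])
  also have "v^2 = (1 - x) powr e" using assms by (simp add: v_def power2_eq_square powr_add[symmetric])
  finally show ?thesis .
qed



lemma H_nonneg:
  fixes r x :: real
  assumes r: "0 \<le> r" "r \<le> 1" and x: "0 \<le> x" "x < 1"
  shows "2 * r * x \<le> (1 + x) powr r - (1 - x) powr r"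
proof -
  define f where "f = (\<lambda>t::real. (1 + t) powr r - (1 - t) powr r - 2 * r * t)"
  have "f 0 \<le> f x"
  proof (rule DERIV_nonneg_imp_increasing_open[of 0 x f])
    show "0 \<le> x" by fact
    fix t assume t: "0 < t" "t < x"
    have d: "(f has_real_derivative (r * (1 + t) powr (r - 1) + r * (1 - t) powr (r - 1) - 2 * r)) (at t)"
      unfolding f_def using t x
      by (auto intro!: derivative_eq_intros)
    have "2 \<le> (1 + t) powr (r - 1) + (1 - t) powr (r - 1)"
      using t x r by (intro amgm_neg) auto
    hence "0 \<le> r * ((1 + t) powr (r - 1) + (1 - t) powr (r - 1) - 2)"
      using r by (intro mult_nonneg_nonneg) auto
    hence "0 \<le> r * (1 + t) powr (r - 1) + r * (1 - t) powr (r - 1) - 2 * r"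
      by (simp add: algebra_simps)
    thus "\<exists>y. (f has_real_derivative y) (at t) \<and> 0 \<le> y" using d by blast
  next
    show "continuous_on {0..x} f" unfolding f_def using x
      by (intro continuous_intros continuous_on_powr') (auto intro!: continuous_intros)
  qed
  thus ?thesis by (simp add: f_def)
qed

lemma G_nonneg:
  fixes q y :: real
  assumes q: "1 \<le> q" "q \<le> 2" and y: "0 \<le> y" "y \<le> 1"
  shows "1 + q * (q - 1) * y^2 / 2 \<le> ((1 + y) powr q + (1 - y) powr q) / 2"
proof -
  define g where "g = (\<lambda>t::real. ((1 + t) powr q + (1 - t) powr q) / 2 - q * (q - 1) * t^2 / 2)"
  have "g 0 \<le> g y"
  proof (rule DERIV_nonneg_imp_increasing_open[of 0 y g])
    show "0 \<le> y" by fact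
    fix t assume t: "0 < t" "t < y"
    have d: "(g has_real_derivative ((q * (1 + t) powr (q - 1) - q * (1 - t) powr (q - 1)) / 2 - q * (q - 1) * t)) (at t)"
      unfolding g_def using t y
      by (auto intro!: derivative_eq_intros simp: power2_eq_square field_simps)
    have "2 * (q - 1) * t \<le> (1 + t) powr (q - 1) - (1 - t) powr (q - 1)"
      using t y q by (intro H_nonneg) auto
    hence "0 \<le> (q / 2) * ((1 + t) powr (q - 1) - (1 - t) powr (q - 1) - 2 * (q - 1) * t)"
      using q by (intro mult_nonneg_nonneg) auto
    hence "0 \<le> (q * (1 + t) powr (q - 1) - q * (1 - t) powr (q - 1)) / 2 - q * (q - 1) * t"
      by (simp add: algebra_simps diff_divide_distrib)
    thus "\<exists>d. (g has_real_derivative d) (at t) \<and> 0 \<le> d" using d by blast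
  next
    show "continuous_on {0..y} g" unfolding g_def using y q
      by (intro continuous_intros continuous_on_powr') (auto intro!: continuous_intros)
  qed
  thus ?thesis by (simp add: g_def field_simps)
qed



lemma abs_pm: "(\<bar>A-B\<bar> = \<bar>A\<bar>+\<bar>B\<bar> \<and> \<bar>A+B\<bar> = \<bar>\<bar>A\<bar>-\<bar>B\<bar>\<bar>) \<or> (\<bar>A+B\<bar> = \<bar>A\<bar>+\<bar>B\<bar> \<and> \<bar>A-B\<bar> = \<bar>\<bar>A\<bar>-\<bar>B\<bar>\<bar>)" for A B :: real
  by (cases "0 \<le> A"; cases "0 \<le> B"; cases "\<bar>A\<bar> \<le> \<bar>B\<bar>") (simp_all add: abs_if)

lemma core2:
  fixes q y :: real
  assumes q: "1 \<le> q" "q \<le> 2" and y: "0 \<le> y" "y \<le> 1"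
  shows "(1 + (q - 1) * y^2) powr (q / 2) \<le> ((1 + y) powr q + (1 - y) powr q) / 2"
proof -
  have "(1 + (q - 1) * y^2) powr (q / 2) \<le> 1 + (q / 2) * ((q - 1) * y^2)"
    using q by (intro bern_conc) auto
  also have "\<dots> = 1 + q * (q - 1) * y^2 / 2" by simp
  also have "\<dots> \<le> ((1 + y) powr q + (1 - y) powr q) / 2" by (rule G_nonneg) (use q y in auto)
  finally show ?thesis .
qed

lemma two_point:
  fixes q A B :: real
  assumes q: "1 \<le> q" "q \<le> 2"
  shows "A^2 + (q - 1) * B^2 \<le> ((\<bar>A - B\<bar> powr q + \<bar>A + B\<bar> powr q) / 2) powr (2 / q)"
proof -
  define M where "M = max \<bar>A\<bar> \<bar>B\<bar>"
  define m where "m = min \<bar>A\<bar> \<bar>B\<bar>"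
  have mM: "0 \<le> m" "m \<le> M" by (auto simp: M_def m_def)
  have sw: "\<bar>A - B\<bar> powr q + \<bar>A + B\<bar> powr q = (M - m) powr q + (M + m) powr q"
  proof -
    have e1: "M - m = \<bar>\<bar>A\<bar>-\<bar>B\<bar>\<bar>" "M + m = \<bar>A\<bar>+\<bar>B\<bar>"
      by (auto simp: M_def m_def max_def min_def)
    show ?thesis unfolding e1 using abs_pm[of A B] by auto
  qed
  have fin: "A^2 + (q - 1) * B^2 \<le> M^2 + (q - 1) * m^2"
  proof (cases "\<bar>B\<bar> \<le> \<bar>A\<bar>")
    case True then show ?thesis by (simp add: M_def m_def max_def min_def)
  next
    case False
    hence e: "M = \<bar>B\<bar>" "m = \<bar>A\<bar>" by (auto simp: M_def m_def)
    have "A^2 \<le> B^2" using False by (simp add: abs_le_square_iff)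
    hence "0 \<le> (2 - q) * (B^2 - A^2)" using q by (intro mult_nonneg_nonneg) auto
    thus ?thesis by (simp add: e algebra_simps)
  qed
  show ?thesis
  proof (cases "M = 0")
    case True
    hence "A = 0" "B = 0" by (auto simp: M_def max_def split: if_splits)
    then show ?thesis by simp
  next
    case False
    hence Mp: "M > 0" using mM by auto
    define y where "y = m / M"
    have y: "0 \<le> y" "y \<le> 1" using mM Mp by (auto simp: y_def)
    have "(M - m) powr q + (M + m) powr q = M powr q * ((1 + y) powr q + (1 - y) powr q)"
    proof -
      have e1: "M - m = M * (1 - y)" and e2: "M + m = M * (1 + y)" using Mp by (auto simp: y_def field_simps)
      have p1: "(M * (1 - y)) powr q = M powr q * (1 - y) powr q" using Mp y by (simp add: powr_mult)
      have p2: "(M * (1 + y)) powr q = M powr q * (1 + y) powr q" using Mp y by (simp add: powr_mult)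
      show ?thesis unfolding e1 e2 p1 p2 by (simp add: algebra_simps)
    qed
    hence eq: "(\<bar>A - B\<bar> powr q + \<bar>A + B\<bar> powr q) / 2 = M powr q * (((1 + y) powr q + (1 - y) powr q) / 2)"
      by (simp add: sw)
    have "M^2 + (q - 1) * m^2 = (M powr q * (1 + (q - 1) * y^2) powr (q / 2)) powr (2 / q)"
    proof -
      have nn: "0 \<le> 1 + (q - 1) * y^2" using q by simp
      have "(M powr q * (1 + (q - 1) * y^2) powr (q / 2)) powr (2 / q)
          = M powr (q * (2/q)) * (1 + (q - 1) * y^2) powr (q / 2 * (2/q))"
        using Mp nn by (simp add: powr_mult powr_powr)
      also have "\<dots> = M powr 2 * (1 + (q - 1) * y^2)" using q by simp
      also have "\<dots> = M^2 + (q - 1) * m^2" using Mp by (simp add: y_def power2_eq_square field_simps)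
      finally show ?thesis by simp
    qed
    also have "\<dots> \<le> (M powr q * (((1 + y) powr q + (1 - y) powr q) / 2)) powr (2 / q)"
      using q y Mp by (intro powr_mono2 mult_left_mono core2) auto
    also have "\<dots> = ((\<bar>A - B\<bar> powr q + \<bar>A + B\<bar> powr q) / 2) powr (2 / q)" by (simp add: eq)
    finally show ?thesis using fin by linarith
  qed
qed

lemma HC1_unif:
  fixes q :: real
  assumes q: "1 \<le> q" "q \<le> 2"
  shows "HC1 (1/2) (\<lambda>a b. 1 + sqrt (q - 1) * (if a then 1 else -1) * (if b then 1 else -1)) q"
  unfolding HC1_def
proof (intro allI)
  fix x0 x1 :: real
  define \<rho> where "\<rho> = sqrt (q - 1)"
  have r2: "\<rho>^2 = q - 1" using q by (simp add: \<rho>_def)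
  define A where "A = (x0 + x1) / 2"
  define B where "B = (x1 - x0) / 2"
  have id: "(1/2)*((1/2)*(1+\<rho>*(-1)*(-1))*x0 + (1/2)*(1+\<rho>*1*(-1))*x1)^2 + (1/2)*((1/2)*(1+\<rho>*(-1)*1)*x0 + (1/2)*(1+\<rho>*1*1)*x1)^2
      = A^2 + \<rho>^2 * B^2"
    unfolding A_def B_def by (simp add: power2_eq_square algebra_simps divide_simps)
  have ab: "A - B = x0" "A + B = x1" by (simp_all add: A_def B_def divide_simps)
  have tp: "A^2 + \<rho>^2 * B^2 \<le> ((1/2) * \<bar>x0\<bar> powr q + (1/2) * \<bar>x1\<bar> powr q) powr (2 / q)"
    using two_point[OF q, of A B] unfolding r2 ab by (simp add: add_divide_distrib)
  have h: "(1/2)*((1/2)*(1+\<rho>*(-1)*(-1))*x0 + (1/2)*(1+\<rho>*1*(-1))*x1)^2 + (1/2)*((1/2)*(1+\<rho>*(-1)*1)*x0 + (1/2)*(1+\<rho>*1*1)*x1)^2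
     \<le> ((1/2) * \<bar>x0\<bar> powr q + (1/2) * \<bar>x1\<bar> powr q) powr (2 / q)"
    unfolding id by (rule tp)
  show "(1 - 1/2) * ((1 - 1/2) * (1 + sqrt (q - 1) * (if False then 1 else -1) * (if False then 1 else -1)) * x0 + 1/2 * (1 + sqrt (q - 1) * (if True then 1 else -1) * (if False then 1 else -1)) * x1)^2
      + 1/2 * ((1 - 1/2) * (1 + sqrt (q - 1) * (if False then 1 else -1) * (if True then 1 else -1)) * x0 + 1/2 * (1 + sqrt (q - 1) * (if True then 1 else -1) * (if True then 1 else -1)) * x1)^2
      \<le> ((1 - 1/2) * \<bar>x0\<bar> powr q + 1/2 * \<bar>x1\<bar> powr q) powr (2 / q)"
  proof -
    have e: "(if False then 1 else -1::real) = -1" "(if True then 1 else -1::real) = 1" "(1 - 1/2::real) = 1/2" by simp_all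
    show ?thesis unfolding e \<rho>_def[symmetric] by (rule h)
  qed
qed

lemma HC1_E:
  fixes q w :: real
  assumes q: "1 \<le> q" and w: "0 \<le> w" "w \<le> 1"
  shows "HC1 w (\<lambda>a b. 1) q"
  unfolding HC1_def
proof (intro allI)
  fix x0 x1 :: real
  define M where "M = (1 - w) * \<bar>x0\<bar> + w * \<bar>x1\<bar>"
  define v where "v = (1 - w) * x0 + w * x1"
  have M0: "0 \<le> M" using w by (simp add: M_def)
  have "\<bar>v\<bar> \<le> \<bar>(1 - w) * x0\<bar> + \<bar>w * x1\<bar>" unfolding v_def by (rule abs_triangle_ineq)
  also have "\<dots> = M" unfolding M_def using w by (simp add: abs_mult)
  finally have vM: "\<bar>v\<bar> \<le> M" .
  have "v^2 = \<bar>v\<bar>^2" by simp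
  also have "\<dots> \<le> M^2" using vM by (intro power_mono) auto
  also have "M^2 = (M powr q) powr (2 / q)"
  proof -
    have "(M powr q) powr (2 / q) = M powr 2" using q by (simp add: powr_powr)
    also have "\<dots> = M^2" using abs_powr2[of M] M0 by simp
    finally show ?thesis by simp
  qed
  also have "\<dots> \<le> ((1 - w) * \<bar>x0\<bar> powr q + w * \<bar>x1\<bar> powr q) powr (2 / q)"
    using q w M0 unfolding M_def by (intro powr_mono2 powr_conv) auto
  finally have fin: "v^2 \<le> ((1 - w) * \<bar>x0\<bar> powr q + w * \<bar>x1\<bar> powr q) powr (2 / q)" .
  have e: "(1 - w) * X + w * X = X" for X :: real by (simp add: algebra_simps)
  show "(1 - w) * ((1 - w) * 1 * x0 + w * 1 * x1)^2 + w * ((1 - w) * 1 * x0 + w * 1 * x1)^2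
      \<le> ((1 - w) * \<bar>x0\<bar> powr q + w * \<bar>x1\<bar> powr q) powr (2 / q)"
    unfolding mult_1_right e v_def[symmetric] by (rule fin)
qed



lemma sum_pmu_prod:
  fixes h :: "nat \<Rightarrow> bool \<Rightarrow> real"
  shows "(\<Sum>T\<in>Pow {..<n}. pmu w n T * (\<Prod>i<n. h i (i \<in> T))) = (\<Prod>i<n. (1 - w i) * h i False + w i * h i True)"
proof -
  have "(\<Sum>T\<in>Pow {..<n}. pmu w n T * (\<Prod>i<n. h i (i \<in> T)))
      = (\<Sum>T\<in>Pow {..<n}. \<Prod>i<n. (\<lambda>i b. (if b then w i else 1 - w i) * h i b) i (i \<in> T))"
    by (intro sum.cong refl) (simp add: pmu_def prod.distrib)
  also have "\<dots> = (\<Prod>i<n. (1 - w i) * h i False + w i * h i True)"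
    by (subst sum_Pow_prod) (simp add: add.commute)
  finally show ?thesis .
qed

lemma sum_pmu_one:
  shows "(\<Sum>T\<in>Pow {..<n}. pmu w n T) = 1"
  using sum_pmu_prod[of w n "\<lambda>i b. 1"] by simp

lemma pb_identity:
  fixes p a b d x0 x1 :: real
  assumes ab: "a * b = 1" and a2: "(1 - p) * a^2 = p" and b2: "p * b^2 = 1 - p" and s: "(1 - p) * a = p * b"
  shows "(1-p) * ((1-p)*(1 + d*a*a)*x0 + p*(1 + d*(-b)*a)*x1)^2
       + p * ((1-p)*(1 + d*a*(-b))*x0 + p*(1 + d*(-b)*(-b))*x1)^2
       = ((1-p)*x0 + p*x1)^2 + d^2 * (p * (1-p)) * (x0 - x1)^2"
proof -
  define m where "m = (1-p)*x0 + p*x1"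
  define D where "D = (1-p)*a*x0 - p*b*x1"
  have SF: "(1-p)*(1 + d*a*a)*x0 + p*(1 + d*(-b)*a)*x1 = m + d*a*D"
    by (simp add: m_def D_def algebra_simps)
  have ST: "(1-p)*(1 + d*a*(-b))*x0 + p*(1 + d*(-b)*(-b))*x1 = m - d*b*D"
    by (simp add: m_def D_def algebra_simps power2_eq_square)
  have L: "(1-p) * ((1-p)*(1 + d*a*a)*x0 + p*(1 + d*(-b)*a)*x1)^2
       + p * ((1-p)*(1 + d*a*(-b))*x0 + p*(1 + d*(-b)*(-b))*x1)^2
       = (1-p)*(m + d*a*D)^2 + p*(m - d*b*D)^2" by (simp only: SF ST)
  have "(1-p)*(m + d*a*D)^2 + p*(m - d*b*D)^2
      = m^2 + 2*m*d*D*((1-p)*a - p*b) + d^2*D^2*((1-p)*a^2 + p*b^2)"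
    by (simp add: power2_eq_square algebra_simps)
  also have "\<dots> = m^2 + d^2*D^2" using s a2 b2 by simp
  finally have E1: "(1-p)*(m + d*a*D)^2 + p*(m - d*b*D)^2 = m^2 + d^2*D^2" .
  have "D = (1-p)*a*(x0 - x1)" unfolding D_def s[symmetric] by (simp add: algebra_simps)
  hence "D^2 = (1-p) * ((1-p)*a^2) * (x0-x1)^2" by (simp add: power2_eq_square)
  hence DD: "D^2 = p * (1-p) * (x0-x1)^2" using a2 by simp
  show ?thesis unfolding L E1 DD by (simp add: m_def algebra_simps)
qed

definition phi :: "real \<Rightarrow> bool \<Rightarrow> real" where
  "phi p b = (if b then - sqrt ((1 - p) / p) else sqrt (p / (1 - p)))"

lemma HC1_pb:
  fixes p d q :: real and k :: nat
  assumes p0: "0 < p" and pk: "p * 2^k \<le> 1" and k1: "1 \<le> k"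
    and qdef: "q = 1 + (1 - p) / (p * k) * d^2" and q1: "1 \<le> q" and q2: "q \<le> 2"
  shows "HC1 p (\<lambda>a b. 1 + d * phi p a * phi p b) q"
  unfolding HC1_def
proof (intro allI)
  fix x0 x1 :: real
  have "(2::real)^1 \<le> 2^k" by (rule power_increasing) (use k1 in auto)
  hence "p * 2 \<le> p * 2^k" using p0 by (intro mult_left_mono) auto
  hence p1: "p < 1" using pk p0 by linarith
  define a where "a = sqrt (p / (1 - p))"
  define b where "b = sqrt ((1 - p) / p)"
  have ab: "a * b = 1" using p0 p1 by (simp add: a_def b_def real_sqrt_mult[symmetric])
  have a2: "(1 - p) * a^2 = p" using p0 p1 by (simp add: a_def)
  have b2: "p * b^2 = 1 - p" using p0 p1 by (simp add: b_def)
  have s: "(1 - p) * a = p * b"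
  proof -
    have "(1 - p) * a = (1 - p) * a * (a * b)" using ab by simp
    also have "\<dots> = ((1 - p) * a^2) * b" by (simp add: power2_eq_square)
    finally show ?thesis using a2 by simp
  qed
  have phiF: "phi p False = a" and phiT: "phi p True = - b" by (simp_all add: phi_def a_def b_def)
  have LHS: "(1 - p) * ((1 - p) * (1 + d * phi p False * phi p False) * x0 + p * (1 + d * phi p True * phi p False) * x1)^2
     + p * ((1 - p) * (1 + d * phi p False * phi p True) * x0 + p * (1 + d * phi p True * phi p True) * x1)^2
     = ((1-p)*x0 + p*x1)^2 + d^2 * (p * (1-p)) * (x0 - x1)^2"
    unfolding phiF phiT by (rule pb_identity[OF ab a2 b2 s])
  define \<rho> where "\<rho> = sqrt (q - 1)"
  have r2: "\<rho>^2 = q - 1" using q1 by (simp add: \<rho>_def)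
  define p' where "p' = p * 2^k"
  have p'01: "0 \<le> p'" "p' \<le> 1" using p0 pk by (auto simp: p'_def)
  define N where "N = Suc k"
  define w where "w = (\<lambda>i. if i < k then 1/2 else p')"
  define cu where "cu = (\<lambda>a b. 1 + sqrt (q - 1) * (if a then 1 else -1) * (if b then 1 else (-1::real)))"
  define c where "c = (\<lambda>i. if i < k then cu else (\<lambda>a b. 1::real))"
  define full where "full = {..<N}"
  define F where "F = (\<lambda>U. if U = full then x1 else x0)"
  have HT: "(\<Sum>T\<in>Pow {..<N}. pmu w N T * (pop w c N F T)^2)
     \<le> (\<Sum>T\<in>Pow {..<N}. pmu w N T * \<bar>F T\<bar> powr q) powr (2/q)"
  proof (rule hc_tensor[OF q1 q2])
    fix i assume "i < N"
    show "0 \<le> w i \<and> w i \<le> 1 \<and> HC1 (w i) (c i) q"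
    proof (cases "i < k")
      case True
      then show ?thesis using HC1_unif[OF q1 q2] by (simp add: w_def c_def cu_def)
    next
      case False
      then show ?thesis using HC1_E[OF q1 p'01] p'01 by (simp add: w_def c_def)
    qed
  qed
  have pmu_full: "pmu w N full = p"
  proof -
    have "pmu w N full = (\<Prod>i<N. w i)" by (simp add: pmu_def full_def)
    also have "\<dots> = (\<Prod>i<k. w i) * w k" by (simp add: N_def)
    also have "(\<Prod>i<k. w i) = (1/2)^k" by (simp add: w_def)
    also have "w k = p'" by (simp add: w_def)
    finally show ?thesis by (simp add: p'_def power_one_over)
  qed
  have full_in: "full \<in> Pow {..<N}" by (simp add: full_def)
  have full_sub: "full \<subseteq> {..<N}" by (simp add: full_def)
  have RHS: "(\<Sum>T\<in>Pow {..<N}. pmu w N T * \<bar>F T\<bar> powr q) = (1 - p) * \<bar>x0\<bar> powr q + p * \<bar>x1\<bar> powr q"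
  proof -
    have "(\<Sum>T\<in>Pow {..<N}. pmu w N T * \<bar>F T\<bar> powr q)
       = (\<Sum>T\<in>Pow {..<N}. \<bar>x0\<bar> powr q * pmu w N T + (if T = full then pmu w N T * (\<bar>x1\<bar> powr q - \<bar>x0\<bar> powr q) else 0))"
      by (intro sum.cong refl) (auto simp: F_def algebra_simps)
    also have "\<dots> = \<bar>x0\<bar> powr q + p * (\<bar>x1\<bar> powr q - \<bar>x0\<bar> powr q)"
      by (simp add: sum.distrib sum_distrib_left[symmetric] sum_pmu_one full_in full_sub pmu_full)
    finally show ?thesis by (simp add: algebra_simps)
  qed
  define K where "K = (\<lambda>T. \<Prod>i<N. c i True (i \<in> T))"
  have pker_full: "pker c N full T = K T" for T by (simp add: pker_def K_def full_def)
  have S1: "(\<Sum>U\<in>Pow {..<N}. pmu w N U * pker c N U T) = 1" for T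
  proof -
    have "(\<Sum>U\<in>Pow {..<N}. pmu w N U * pker c N U T) = (\<Prod>i<N. (1 - w i) * c i False (i \<in> T) + w i * c i True (i \<in> T))"
      unfolding pker_def by (rule sum_pmu_prod[of w N "\<lambda>i b. c i b (i \<in> T)", simplified])
    also have "\<dots> = 1" by (intro prod.neutral) (auto simp: w_def c_def cu_def field_simps)
    finally show ?thesis .
  qed
  have popF: "pop w c N F T = x0 + (x1 - x0) * p * K T" for T
  proof -
    have "pop w c N F T = (\<Sum>U\<in>Pow {..<N}. x0 * (pmu w N U * pker c N U T) + (if U = full then (x1 - x0) * (pmu w N U * pker c N U T) else 0))"
      unfolding pop_def by (intro sum.cong refl) (auto simp: F_def algebra_simps)
    also have "\<dots> = x0 + (x1 - x0) * p * K T"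
      by (simp add: sum.distrib sum_distrib_left[symmetric] S1 full_in full_sub pmu_full pker_full)
    finally show ?thesis .
  qed
  have SK: "(\<Sum>T\<in>Pow {..<N}. pmu w N T * K T) = 1"
  proof -
    have "(\<Sum>T\<in>Pow {..<N}. pmu w N T * K T) = (\<Prod>i<N. (1 - w i) * c i True False + w i * c i True True)"
      unfolding K_def by (rule sum_pmu_prod)
    also have "\<dots> = 1" by (intro prod.neutral) (auto simp: w_def c_def cu_def field_simps)
    finally show ?thesis .
  qed
  have SK2: "(\<Sum>T\<in>Pow {..<N}. pmu w N T * (K T)^2) = (1 + \<rho>^2)^k"
  proof -
    have "(\<Sum>T\<in>Pow {..<N}. pmu w N T * (K T)^2) = (\<Sum>T\<in>Pow {..<N}. pmu w N T * (\<Prod>i<N. (c i True (i \<in> T))^2))"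
      unfolding K_def by (simp add: prod_power_distrib)
    also have "\<dots> = (\<Prod>i<N. (1 - w i) * (c i True False)^2 + w i * (c i True True)^2)"
      by (rule sum_pmu_prod)
    also have "\<dots> = (\<Prod>i<k. (1 - w i) * (c i True False)^2 + w i * (c i True True)^2) * ((1 - w k) * (c k True False)^2 + w k * (c k True True)^2)"
      by (simp add: N_def)
    also have "(\<Prod>i<k. (1 - w i) * (c i True False)^2 + w i * (c i True True)^2) = (\<Prod>i<k. 1 + \<rho>^2)"
      by (intro prod.cong refl) (simp add: w_def c_def cu_def \<rho>_def[symmetric] power2_eq_square field_simps)
    also have "(1 - w k) * (c k True False)^2 + w k * (c k True True)^2 = 1" by (simp add: w_def c_def)
    finally show ?thesis by simp
  qed
  have LHS2: "(\<Sum>T\<in>Pow {..<N}. pmu w N T * (pop w c N F T)^2)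
      = x0^2 + 2 * x0 * (x1 - x0) * p + (x1 - x0)^2 * p^2 * (1 + \<rho>^2)^k"
  proof -
    have "(\<Sum>T\<in>Pow {..<N}. pmu w N T * (pop w c N F T)^2)
      = (\<Sum>T\<in>Pow {..<N}. x0^2 * pmu w N T + (2 * x0 * (x1 - x0) * p) * (pmu w N T * K T) + ((x1 - x0)^2 * p^2) * (pmu w N T * (K T)^2))"
      by (intro sum.cong refl) (simp add: popF power2_eq_square algebra_simps)
    also have "\<dots> = x0^2 * (\<Sum>T\<in>Pow {..<N}. pmu w N T) + (2 * x0 * (x1 - x0) * p) * (\<Sum>T\<in>Pow {..<N}. pmu w N T * K T) + ((x1 - x0)^2 * p^2) * (\<Sum>T\<in>Pow {..<N}. pmu w N T * (K T)^2)"
      by (simp add: sum.distrib sum_distrib_left)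
    also have "\<dots> = x0^2 + 2 * x0 * (x1 - x0) * p + (x1 - x0)^2 * p^2 * (1 + \<rho>^2)^k"
      by (simp add: sum_pmu_one SK SK2)
    finally show ?thesis .
  qed
  have key: "d^2 * (p * (1 - p)) = p^2 * (real k * \<rho>^2)"
    using p0 p1 k1 unfolding r2 qdef by (simp add: field_simps power2_eq_square)
  have bern: "1 + real k * \<rho>^2 \<le> (1 + \<rho>^2)^k"
  proof (rule Bernoulli_inequality)
    have "0 \<le> \<rho>^2" by simp
    thus "-1 \<le> \<rho>^2" by linarith
  qed
  have "((1-p)*x0 + p*x1)^2 + d^2 * (p * (1-p)) * (x0 - x1)^2
      = x0^2 + 2 * x0 * (x1 - x0) * p + (x1 - x0)^2 * p^2 * (1 + real k * \<rho>^2)"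
    unfolding key by (simp add: power2_eq_square algebra_simps)
  also have "\<dots> \<le> x0^2 + 2 * x0 * (x1 - x0) * p + (x1 - x0)^2 * p^2 * (1 + \<rho>^2)^k"
    using bern by (intro add_left_mono mult_left_mono) auto
  also have "\<dots> \<le> ((1 - p) * \<bar>x0\<bar> powr q + p * \<bar>x1\<bar> powr q) powr (2/q)"
    using HT unfolding LHS2 RHS .
  finally show "(1 - p) * ((1 - p) * (1 + d * phi p False * phi p False) * x0 + p * (1 + d * phi p True * phi p False) * x1)^2
     + p * ((1 - p) * (1 + d * phi p False * phi p True) * x0 + p * (1 + d * phi p True * phi p True) * x1)^2
     \<le> ((1 - p) * \<bar>x0\<bar> powr q + p * \<bar>x1\<bar> powr q) powr (2/q)"
    unfolding LHS .
qed



lemma ubasis_prod: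
  assumes "finite S"
  shows "ubasis p S T = (\<Prod>i\<in>S. phi p (i \<in> T))"
proof -
  have "(\<Prod>i\<in>S. phi p (i \<in> T)) = (\<Prod>i\<in>S. if i \<in> T then - sqrt ((1 - p) / p) else sqrt (p / (1 - p)))"
    by (simp add: phi_def)
  also have "\<dots> = (\<Prod>i\<in>S \<inter> {x. x \<in> T}. - sqrt ((1 - p) / p)) * (\<Prod>i\<in>S \<inter> - {x. x \<in> T}. sqrt (p / (1 - p)))"
    by (rule prod.If_cases[OF assms])
  also have "\<dots> = ubasis p S T"
    by (simp add: ubasis_def Diff_eq)
  finally show ?thesis by simp
qed

lemma mu_pmu:
  assumes "T \<subseteq> {..<n}"
  shows "mu p n T = pmu (\<lambda>_. p) n T"
proof -
  have fin: "finite {..<n}" by simp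
  have "pmu (\<lambda>_. p) n T = (\<Prod>i\<in>{..<n} \<inter> {x. x \<in> T}. p) * (\<Prod>i\<in>{..<n} \<inter> - {x. x \<in> T}. 1 - p)"
    unfolding pmu_def by (rule prod.If_cases[OF fin])
  also have "{..<n} \<inter> {x. x \<in> T} = T" using assms by auto
  also have "card ({..<n} \<inter> - {x. x \<in> T}) = n - card T"
  proof -
    have "{..<n} \<inter> - {x. x \<in> T} = {..<n} - T" by auto
    thus ?thesis using assms by (simp add: card_Diff_subset finite_subset)
  qed
  hence "(\<Prod>i\<in>{..<n} \<inter> - {x. x \<in> T}. 1 - p) = (1 - p) ^ (n - card T)" by simp
  finally show ?thesis by (simp add: mu_def)
qed

lemma noise_pop:
  "noise p n \<delta> f T = pop (\<lambda>_. p) (\<lambda>_ a b. 1 + \<delta> * phi p a * phi p b) n f T"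
proof -
  have finS: "finite S" if "S \<in> cube n" for S using that by (auto simp: cube_def finite_subset)
  have inner: "(\<Sum>S\<in>cube n. \<delta> ^ card S * ubasis p S U * ubasis p S T)
       = pker (\<lambda>_ a b. 1 + \<delta> * phi p a * phi p b) n U T" for U
  proof -
    have "(\<Sum>S\<in>cube n. \<delta> ^ card S * ubasis p S U * ubasis p S T)
        = (\<Sum>S\<in>Pow {..<n}. (\<Prod>i\<in>S. \<delta> * phi p (i \<in> U) * phi p (i \<in> T)) * (\<Prod>i\<in>{..<n} - S. 1))"
      by (intro sum.cong refl) (auto simp: cube_def ubasis_prod finite_subset prod.distrib)
    also have "\<dots> = (\<Prod>i<n. \<delta> * phi p (i \<in> U) * phi p (i \<in> T) + 1)"
      by (rule prod_add[symmetric]) simp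
    also have "\<dots> = pker (\<lambda>_ a b. 1 + \<delta> * phi p a * phi p b) n U T"
      by (simp add: pker_def add.commute)
    finally show ?thesis .
  qed
  have "noise p n \<delta> f T = (\<Sum>S\<in>cube n. \<Sum>U\<in>cube n. mu p n U * f U * (\<delta> ^ card S * ubasis p S U * ubasis p S T))"
    unfolding noise_def fourier_def expect_def
    by (simp add: sum_distrib_left sum_distrib_right algebra_simps)
  also have "\<dots> = (\<Sum>U\<in>cube n. mu p n U * f U * (\<Sum>S\<in>cube n. \<delta> ^ card S * ubasis p S U * ubasis p S T))"
    by (subst sum.swap) (simp add: sum_distrib_left)
  also have "\<dots> = pop (\<lambda>_. p) (\<lambda>_ a b. 1 + \<delta> * phi p a * phi p b) n f T"
    unfolding pop_def inner
    by (intro sum.cong) (auto simp: cube_def mu_pmu)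
  finally show ?thesis .
qed

theorem proposition3p3:
  fixes p \<delta> :: real and n :: nat and f :: "nat set \<Rightarrow> real"
  assumes "0 < p" and "p \<le> 1/2"
    and "0 \<le> \<delta>"
    and "\<delta> \<le> sqrt (p * of_int \<lfloor>log 2 (1 / p)\<rfloor> / (1 - p))"
  shows "qnorm p n 2 (noise p n \<delta> f)
           \<le> qnorm p n (1 + (1 - p) / (p * of_int \<lfloor>log 2 (1 / p)\<rfloor>) * \<delta>^2) f"
proof -
  note p0 = assms(1) and ph = assms(2) and d0 = assms(3) and dle = assms(4)
  have p1: "p < 1" using ph by simp
  define L where "L = \<lfloor>log 2 (1 / p)\<rfloor>"
  have "2 powr 1 \<le> 1 / p" using p0 ph by (simp add: field_simps)
  hence "1 \<le> log 2 (1 / p)" using p0 by (subst le_log_iff) auto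
  hence L1: "1 \<le> L" by (simp add: L_def)
  define k where "k = nat L"
  have kL: "real k = of_int L" using L1 by (simp add: k_def)
  have k1: "1 \<le> k" using L1 by (simp add: k_def)
  have "real k \<le> log 2 (1 / p)" unfolding kL L_def by (rule of_int_floor_le)
  hence "2 powr real k \<le> 1 / p" using p0 by (subst (asm) le_log_iff) auto
  hence "2 ^ k \<le> 1 / p" by (simp add: powr_realpow)
  hence pk: "p * 2 ^ k \<le> 1" using p0 by (simp add: field_simps)
  define q where "q = 1 + (1 - p) / (p * of_int L) * \<delta>^2"
  have qk: "q = 1 + (1 - p) / (p * real k) * \<delta>^2" by (simp add: q_def kL)
  have Lpos: "0 < (of_int L :: real)" using L1 by simp
  have q1: "1 \<le> q" unfolding q_def using p0 p1 Lpos by (intro add_increasing2 mult_nonneg_nonneg) auto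
  have X0: "0 \<le> p * of_int L / (1 - p)" using p0 p1 Lpos by simp
  have "\<delta>^2 \<le> (sqrt (p * of_int L / (1 - p)))^2"
    using d0 dle by (intro power_mono) (auto simp: L_def)
  hence d2: "\<delta>^2 \<le> p * of_int L / (1 - p)" using X0 by simp
  have "(1 - p) / (p * of_int L) * \<delta>^2 \<le> (1 - p) / (p * of_int L) * (p * of_int L / (1 - p))"
    using d2 p0 p1 Lpos by (intro mult_left_mono) auto
  also have "\<dots> = 1" using p0 p1 Lpos by simp
  finally have q2: "q \<le> 2" by (simp add: q_def)
  define w where "w = (\<lambda>_::nat. p)"
  define c where "c = (\<lambda>(_::nat) a b. 1 + \<delta> * phi p a * phi p b)"
  have HT: "(\<Sum>T\<in>Pow {..<n}. pmu w n T * (pop w c n f T)^2)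
     \<le> (\<Sum>T\<in>Pow {..<n}. pmu w n T * \<bar>f T\<bar> powr q) powr (2/q)"
  proof (rule hc_tensor[OF q1 q2])
    fix i assume "i < n"
    show "0 \<le> w i \<and> w i \<le> 1 \<and> HC1 (w i) (c i) q"
      using p0 p1 HC1_pb[OF p0 pk k1 qk q1 q2] by (simp add: w_def c_def)
  qed
  have E2: "expect p n (\<lambda>T. \<bar>noise p n \<delta> f T\<bar> powr 2) = (\<Sum>T\<in>Pow {..<n}. pmu w n T * (pop w c n f T)^2)"
    unfolding expect_def cube_def
    by (intro sum.cong refl) (auto simp: mu_pmu w_def c_def noise_pop abs_powr2)
  have Eq: "expect p n (\<lambda>T. \<bar>f T\<bar> powr q) = (\<Sum>T\<in>Pow {..<n}. pmu w n T * \<bar>f T\<bar> powr q)"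
    unfolding expect_def cube_def
    by (intro sum.cong refl) (auto simp: mu_pmu w_def)
  have pn: "0 \<le> pmu w n T" for T by (rule pmu_nonneg) (use p0 p1 in \<open>auto simp: w_def\<close>)
  have Y0: "0 \<le> (\<Sum>T\<in>Pow {..<n}. pmu w n T * \<bar>f T\<bar> powr q)"
    using pn by (intro sum_nonneg mult_nonneg_nonneg) auto
  have X0: "0 \<le> (\<Sum>T\<in>Pow {..<n}. pmu w n T * (pop w c n f T)^2)"
    using pn by (intro sum_nonneg mult_nonneg_nonneg) auto
  have "qnorm p n 2 (noise p n \<delta> f) = (\<Sum>T\<in>Pow {..<n}. pmu w n T * (pop w c n f T)^2) powr (1/2)"
    unfolding qnorm_def E2 by simp
  also have "\<dots> \<le> ((\<Sum>T\<in>Pow {..<n}. pmu w n T * \<bar>f T\<bar> powr q) powr (2/q)) powr (1/2)"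
    using HT X0 by (intro powr_mono2) auto
  also have "\<dots> = (\<Sum>T\<in>Pow {..<n}. pmu w n T * \<bar>f T\<bar> powr q) powr (1/q)"
    using Y0 by (simp add: powr_powr)
  also have "\<dots> = qnorm p n q f" unfolding qnorm_def Eq by simp
  finally show ?thesis by (simp add: q_def L_def)
qed

end
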